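(* Let $\kappa$ be a regular cardinal and $A$ a $\kappa$-additive complete atomic modal algebra. Then $\tau_A:A\to G(F(A))$, $\tau_A(x)=\{a\in\mathrm{At}(A)\mid a\leq x\}$, is an isomorphism of complete modal algebras; in particular, for every $x\in A$, $$\{a\in\mathrm{At}(A)\mid a\leq\Diamond x\}=\bigcap_{X\subseteq A,\ |X|<\kappa}R(X)^{-1}\big[\{a\in\mathrm{At}(A)\mid a\leq x\}\big].$$
   Context: A modal algebra is a Boolean algebra $A$ with a unary operation $\Diamond$ satisfying $\Diamond 0=0$ and $\Diamond(x\vee y)=\Diamond x\vee\Diamond y$; complete/atomic refer to the Boolean reduct (atomic: every non-zero element is the join of atoms below it); $\mathrm{At}(A)$ is the set of atoms; $\kappa$-additive means $\Diamond\bigvee X=\bigvee_{x\in X}\Diamond x$ for $|X|<\kappa$. A homomorphism of complete modal algebras is a Boolean homomorphism preserving all joins and meets and commuting with $\Diamond$. For $X\subseteq A$, $R(X)$ is the relation on $\mathrm{At}(A)$ with $a\,R(X)\,c\iff a\leq\bigwedge\{\Diamond x\mid x\in X,\ c\leq x\}$ (empty meet $=1$); $F(A)=\langle\mathrm{At}(A),\{R(X)\mid X\subseteq A,|X|<\kappa\}\rangle$. For a relation $R$ and a set $Y$, $R^{-1}[Y]=\{w\mid wRy\text{ for some }y\in Y\}$. For a multi-relational Kripke frame $M=\langle W,S\rangle$, $G(M)$ is the powerset Boolean algebra $\mathcal P(W)$ with $\Diamond_MY=\bigcap_{R\in S}R^{-1}[Y]$. *)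

theory Defs
  imports Main
begin

definition modal_algebra :: "('a::boolean_algebra \<Rightarrow> 'a) \<Rightarrow> bool" where
  "modal_algebra dia \<longleftrightarrow> dia bot = bot \<and> (\<forall>x y. dia (sup x y) = sup (dia x) (dia y))"

definition is_atom :: "'a::boolean_algebra \<Rightarrow> bool" where
  "is_atom a \<longleftrightarrow> a \<noteq> bot \<and> (\<forall>b. b \<le> a \<longrightarrow> b = bot \<or> b = a)"

definition At :: "'a::boolean_algebra set" where
  "At = {a. is_atom a}"

definition atomic_alg :: "'a::complete_boolean_algebra itself \<Rightarrow> bool" where
  "atomic_alg _ \<longleftrightarrow> (\<forall>x::'a. x \<noteq> bot \<longrightarrow> x = Sup {a \<in> At. a \<le> x})"

definition kappa_additive :: "'k rel \<Rightarrow> ('a::complete_boolean_algebra \<Rightarrow> 'a) \<Rightarrow> bool" where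
  "kappa_additive \<kappa> dia \<longleftrightarrow> (\<forall>X::'a set. ordLess2 (card_of X) \<kappa> \<longrightarrow> dia (Sup X) = (SUP x\<in>X. dia x))"

definition regular_cardinal :: "'k rel \<Rightarrow> bool" where
  "regular_cardinal \<kappa> \<longleftrightarrow> Card_order \<kappa> \<and> Cinfinite \<kappa> \<and> regularCard \<kappa>"

definition relR :: "('a::complete_boolean_algebra \<Rightarrow> 'a) \<Rightarrow> 'a set \<Rightarrow> ('a \<times> 'a) set" where
  "relR dia X = {(a, c). a \<in> At \<and> c \<in> At \<and> a \<le> Inf {dia x | x. x \<in> X \<and> c \<le> x}}"

definition frame_rels :: "'k rel \<Rightarrow> ('a::complete_boolean_algebra \<Rightarrow> 'a) \<Rightarrow> ('a \<times> 'a) set set" where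
  "frame_rels \<kappa> dia = {relR dia X | X. ordLess2 (card_of X) \<kappa>}"

definition inv_img :: "('w \<times> 'w) set \<Rightarrow> 'w set \<Rightarrow> 'w set" where
  "inv_img R Y = {w. \<exists>y\<in>Y. (w, y) \<in> R}"

definition dia_G :: "'w set \<Rightarrow> ('w \<times> 'w) set set \<Rightarrow> 'w set \<Rightarrow> 'w set" where
  "dia_G W S Y = {w \<in> W. \<forall>R\<in>S. w \<in> inv_img R Y}"

definition tau :: "'a::complete_boolean_algebra \<Rightarrow> 'a set" where
  "tau x = {a \<in> At. a \<le> x}"

definition cma_iso_onto_powerset ::
  "('a::complete_boolean_algebra \<Rightarrow> 'a) \<Rightarrow> 'w set \<Rightarrow> ('w set \<Rightarrow> 'w set) \<Rightarrow> ('a \<Rightarrow> 'w set) \<Rightarrow> bool" where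
  "cma_iso_onto_powerset dia W diaW f \<longleftrightarrow>
     bij_betw f UNIV (Pow W) \<and>
     f bot = {} \<and> f top = W \<and>
     (\<forall>x y. f (sup x y) = f x \<union> f y) \<and>
     (\<forall>x y. f (inf x y) = f x \<inter> f y) \<and>
     (\<forall>x. f (- x) = W - f x) \<and>
     (\<forall>S. f (Sup S) = \<Union> (f ` S)) \<and>
     (\<forall>S. f (Inf S) = W \<inter> \<Inter> (f ` S)) \<and>
     (\<forall>x. f (dia x) = diaW (f x))"

end

theory Submission
  imports Defs
begin

lemma atom_le_Sup:
  fixes a :: "'a::complete_boolean_algebra"
  assumes "is_atom a" "a \<le> Sup S"
  shows "\<exists>s\<in>S. a \<le> s"
proof (rule ccontr)
  assume n: "\<not> (\<exists>s\<in>S. a \<le> s)"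
  have "\<forall>s\<in>S. inf a s = bot"
  proof
    fix s assume "s \<in> S"
    have "inf a s \<le> a" by simp
    then have "inf a s = bot \<or> inf a s = a" using assms(1) unfolding is_atom_def by blast
    moreover have "inf a s \<noteq> a" using n \<open>s \<in> S\<close> by (metis inf.absorb_iff1)
    ultimately show "inf a s = bot" by blast
  qed
  then have "(SUP s\<in>S. inf a s) = bot" by simp
  moreover have "a = inf a (Sup S)" using assms(2) by (simp add: inf.absorb1)
  ultimately have "a = bot" by (simp add: inf_Sup)
  then show False using assms(1) unfolding is_atom_def by blast
qed

lemma atom_le_sup:
  fixes a :: "'a::complete_boolean_algebra"
  assumes "is_atom a"
  shows "a \<le> sup x y \<longleftrightarrow> a \<le> x \<or> a \<le> y"
  using atom_le_Sup[OF assms, of "{x,y}"] by (auto intro: le_supI1 le_supI2)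

lemma atom_le_compl:
  fixes a :: "'a::complete_boolean_algebra"
  assumes "is_atom a"
  shows "a \<le> - x \<longleftrightarrow> \<not> a \<le> x"
proof
  assume "a \<le> - x"
  show "\<not> a \<le> x"
  proof
    assume "a \<le> x"
    then have "a \<le> inf x (- x)" using \<open>a \<le> - x\<close> by (rule le_infI)
    then have "a \<le> bot" by simp
    then have "a = bot" by (simp add: bot_unique)
    then show False using assms unfolding is_atom_def by blast
  qed
next
  assume h: "\<not> a \<le> x"
  have "inf a x \<le> a" by simp
  then have "inf a x = bot \<or> inf a x = a" using assms unfolding is_atom_def by blast
  then have "inf a x = bot" using h by (metis inf.absorb_iff1)
  then show "a \<le> - x" by (simp add: inf_shunt)
qed

lemma Sup_tau:
  fixes x :: "'a::complete_boolean_algebra"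
  assumes "atomic_alg TYPE('a)"
  shows "Sup (tau x) = x"
proof (cases "x = bot")
  case True
  then have "tau x = {}" unfolding tau_def At_def is_atom_def by (auto simp: bot_unique)
  then show ?thesis using True by simp
next
  case False
  then show ?thesis using assms unfolding atomic_alg_def tau_def by metis
qed

lemma tau_Sup_At:
  fixes S :: "'a::complete_boolean_algebra set"
  assumes "S \<subseteq> At"
  shows "tau (Sup S) = S"
proof
  show "tau (Sup S) \<subseteq> S"
  proof
    fix a assume "a \<in> tau (Sup S)"
    then have a: "is_atom a" "a \<le> Sup S" unfolding tau_def At_def by auto
    then obtain s where s: "s \<in> S" "a \<le> s" using atom_le_Sup by blast
    then have "is_atom s" using assms unfolding At_def by auto
    then have "a = s" using s a(1) unfolding is_atom_def by blast
    then show "a \<in> S" using s by simp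
  qed
  show "S \<subseteq> tau (Sup S)" using assms unfolding tau_def by (auto intro: Sup_upper)
qed

lemma dia_mono:
  assumes "modal_algebra dia" "x \<le> y"
  shows "dia x \<le> dia y"
proof -
  have "dia y = sup (dia x) (dia y)" using assms unfolding modal_algebra_def
    by (metis sup.absorb2)
  then show ?thesis by (metis sup.cobounded1)
qed

theorem theorem9p2:
  fixes \<kappa> :: "'k rel" and dia :: "'a::complete_boolean_algebra \<Rightarrow> 'a"
  assumes "regular_cardinal \<kappa>"
    and "modal_algebra dia"
    and "atomic_alg TYPE('a)"
    and "kappa_additive \<kappa> dia"
  shows "cma_iso_onto_powerset dia (At::'a set) (dia_G At (frame_rels \<kappa> dia)) tau
    \<and> (\<forall>x::'a. {a \<in> At. a \<le> dia x} =
         {a \<in> At. \<forall>X::'a set. ordLess2 (card_of X) \<kappa> \<longrightarrow> a \<in> inv_img (relR dia X) {c \<in> At. c \<le> x}})"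
proof -
  have inf: "Cinfinite \<kappa>" using assms(1) unfolding regular_cardinal_def by blast
  have modal: "\<forall>x::'a. {a \<in> At. a \<le> dia x} =
         {a \<in> At. \<forall>X::'a set. ordLess2 (card_of X) \<kappa> \<longrightarrow> a \<in> inv_img (relR dia X) {c \<in> At. c \<le> x}}"
  proof (intro allI set_eqI iffI)
    fix x a
    assume "a \<in> {a \<in> At. a \<le> dia x}"
    then have a: "is_atom a" "a \<le> dia x" "a \<in> At" unfolding At_def by auto
    show "a \<in> {a \<in> At. \<forall>X::'a set. ordLess2 (card_of X) \<kappa> \<longrightarrow> a \<in> inv_img (relR dia X) {c \<in> At. c \<le> x}}"
    proof (intro CollectI conjI allI impI)
      show "a \<in> At" by fact
      fix X :: "'a set" assume X: "ordLess2 (card_of X) \<kappa>"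
      show "a \<in> inv_img (relR dia X) {c \<in> At. c \<le> x}"
      proof (rule ccontr)
        assume nc: "a \<notin> inv_img (relR dia X) {c \<in> At. c \<le> x}"
        define Y where "Y = {y \<in> X. \<not> a \<le> dia y}"
        have cov: "\<forall>c\<in>At. c \<le> x \<longrightarrow> (\<exists>y\<in>Y. c \<le> y)"
        proof (intro ballI impI)
          fix c assume c: "c \<in> At" "c \<le> x"
          have "\<not> a \<le> Inf {dia y | y. y \<in> X \<and> c \<le> y}"
            using nc c a(3) unfolding inv_img_def relR_def by blast
          then obtain y where "y \<in> X" "c \<le> y" "\<not> a \<le> dia y"
            by (auto intro: Inf_greatest)
          then show "\<exists>y\<in>Y. c \<le> y" unfolding Y_def by blast
        qed
        have "x = Sup (tau x)" using Sup_tau[OF assms(3)] by simp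
        also have "\<dots> \<le> Sup Y"
          using cov unfolding tau_def by (auto intro!: Sup_least intro: Sup_upper2)
        finally have "dia x \<le> dia (Sup Y)" using dia_mono[OF assms(2)] by blast
        moreover have "ordLess2 (card_of Y) \<kappa>"
          by (rule ordLeq_ordLess_trans[OF card_of_mono1 X]) (auto simp: Y_def)
        then have "dia (Sup Y) = (SUP y\<in>Y. dia y)" using assms(4) unfolding kappa_additive_def by blast
        ultimately have "a \<le> Sup (dia ` Y)" using a(2) by (metis order_trans)
        then obtain s where "s \<in> dia ` Y" "a \<le> s" using atom_le_Sup[OF a(1)] by blast
        then show False unfolding Y_def by auto
      qed
    qed
  next
    fix x a
    assume h: "a \<in> {a \<in> At. \<forall>X::'a set. ordLess2 (card_of X) \<kappa> \<longrightarrow> a \<in> inv_img (relR dia X) {c \<in> At. c \<le> x}}"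
    have fin: "ordLess2 (card_of {x}) \<kappa>"
      by (rule Cfinite_ordLess_Cinfinite[OF _ inf])
        (simp add: cfinite_def Field_card_of card_of_Card_order card_of_card_order_on)
    then obtain c where "c \<in> At" "c \<le> x" "(a, c) \<in> relR dia {x}"
      using h unfolding inv_img_def by blast
    then have "a \<le> Inf {dia y | y. y \<in> {x} \<and> c \<le> y}" "a \<in> At" unfolding relR_def by auto
    moreover have "{dia y | y. y \<in> {x} \<and> c \<le> y} = {dia x}" using \<open>c \<le> x\<close> by auto
    ultimately show "a \<in> {a \<in> At. a \<le> dia x}" by simp
  qed
  have tauAt: "tau x \<subseteq> At" for x :: 'a unfolding tau_def by auto
  have bij: "bij_betw tau UNIV (Pow (At::'a set))"
  proof (rule bij_betw_byWitness[where f' = Sup])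
    show "\<forall>x\<in>UNIV. Sup (tau x) = (x::'a)" using Sup_tau[OF assms(3)] by blast
    show "\<forall>y\<in>Pow (At::'a set). tau (Sup y) = (y::'a set)" using tau_Sup_At by blast
    show "tau ` (UNIV::'a set) \<subseteq> Pow At" using tauAt by blast
    show "Sup ` Pow (At::'a set) \<subseteq> UNIV" by simp
  qed
  have iso: "cma_iso_onto_powerset dia (At::'a set) (dia_G At (frame_rels \<kappa> dia)) tau"
    unfolding cma_iso_onto_powerset_def
  proof (intro conjI allI)
    show "bij_betw tau UNIV (Pow (At::'a set))" by fact
    show "tau (bot::'a) = {}" unfolding tau_def At_def is_atom_def by (auto simp: bot_unique)
    show "tau (top::'a) = At" unfolding tau_def by auto
    fix x y :: 'a
    show "tau (sup x y) = tau x \<union> tau y" unfolding tau_def At_def by (auto simp: atom_le_sup)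
    show "tau (inf x y) = tau x \<inter> tau y" unfolding tau_def by auto
    show "tau (- x) = At - tau x" unfolding tau_def At_def by (auto simp: atom_le_compl)
  next
    fix S :: "'a set"
    show "tau (Sup S) = \<Union> (tau ` S)" unfolding tau_def At_def
      using atom_le_Sup by (auto intro: Sup_upper2)
    show "tau (Inf S) = At \<inter> \<Inter> (tau ` S)" unfolding tau_def
      by (auto intro: Inf_greatest order_trans[OF _ Inf_lower])
  next
    fix x :: 'a
    show "tau (dia x) = dia_G At (frame_rels \<kappa> dia) (tau x)"
    proof -
      have "dia_G At (frame_rels \<kappa> dia) (tau x) = {a \<in> At. \<forall>X::'a set. ordLess2 (card_of X) \<kappa> \<longrightarrow> a \<in> inv_img (relR dia X) {c \<in> At. c \<le> x}}"
        unfolding dia_G_def frame_rels_def tau_def by blast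
      moreover have "tau (dia x) = {a \<in> At. a \<le> dia x}" unfolding tau_def by simp
      ultimately show ?thesis using modal by metis
    qed
  qed
  show ?thesis using iso modal by (rule conjI)
qed

end
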